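(* Let $C>0$ be a constant such that for every sufficiently large positive integer $q$ there exists a subset $S\subseteq\mathbb{Z}/q\mathbb{Z}$ with $|S|>q/\exp(C\sqrt{\log q})$ containing no three-term arithmetic progression modulo $q$ (no $a,b,c\in S$ with $a\not\equiv b$ and $a+b\equiv 2c\pmod q$). Then for every sequence $x_1,x_2,x_3,\dots$ of numbers in $(0,1]$ converging to $0$, there are infinitely many positive integers $n$ such that $$\frac{r(x_{n+1})}{r(x_n)}\ <\ \exp\left(-\frac{1}{2C^2}\left(\log^2 x_{n+1}-\log^2 x_n\right)\right).$$
   Context: For a positive integer $n$ and $T\subseteq \mathbb{Z}/n\mathbb{Z}$, $\mu_n(T)=\#\{(a,b,c)\in T^3 : a+b\equiv 2c \pmod n\}/n^2$ (ordered triples, trivial ones included). For $0<\rho\le1$, $r_q(\rho)=\min\{\mu_q(S): S\subseteq \mathbb{Z}/q\mathbb{Z},\ |S|\ge\rho q\}$, and $r(\rho)=\liminf_{q\to\infty,\ q\text{ prime}} r_q(\rho)$. *)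

theory Defs
  imports "HOL-Analysis.Analysis" "HOL-Computational_Algebra.Primes"
begin

text \<open>Z/nZ is represented by the residues {0..<n}; congruences by mod.\<close>

definition mu :: "nat \<Rightarrow> nat set \<Rightarrow> real" where
  "mu n T = real (card {(a, b, c). a \<in> T \<and> b \<in> T \<and> c \<in> T \<and> (a + b) mod n = (2 * c) mod n})
            / (real n)^2"

definition rq :: "nat \<Rightarrow> real \<Rightarrow> real" where
  "rq q \<rho> = Min {mu q S | S. S \<subseteq> {0..<q} \<and> real (card S) \<ge> \<rho> * real q}"

definition r :: "real \<Rightarrow> real" where
  "r \<rho> = real_of_ereal
     (Liminf (inf sequentially (principal {q. prime q})) (\<lambda>q. ereal (rq q \<rho>)))"

end

theory Submission imports Defs begin

lemma rq_set_eq: "{mu q S | S. S \<subseteq> {0..<q} \<and> real (card S) \<ge> \<rho> * real q}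
   = mu q ` {S. S \<subseteq> {0..<q} \<and> real (card S) \<ge> \<rho> * real q}" by auto

lemma rq_set_fin: "finite {mu q S | S. S \<subseteq> {0..<q} \<and> real (card S) \<ge> \<rho> * real q}"
  unfolding rq_set_eq by (rule finite_imageI) (rule finite_subset[of _ "Pow {0..<q}"], auto)

lemma rq_le_mu:
  assumes "T \<subseteq> {0..<q}" "real (card T) \<ge> \<rho> * real q"
  shows "rq q \<rho> \<le> mu q T"
  unfolding rq_def by (rule Min_le[OF rq_set_fin]) (use assms in auto)

lemma mu_nonneg: "0 \<le> mu q T" unfolding mu_def by simp

lemma rq_nonneg: assumes "\<rho> \<le> 1" shows "0 \<le> rq q \<rho>"
proof -
  have ne: "{0..<q} \<in> {S. S \<subseteq> {0..<q} \<and> real (card S) \<ge> \<rho> * real q}"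
    using mult_right_mono[OF assms, of "real q"] by simp
  have "rq q \<rho> \<in> {mu q S | S. S \<subseteq> {0..<q} \<and> real (card S) \<ge> \<rho> * real q}"
    unfolding rq_def by (rule Min_in[OF rq_set_fin]) (use ne in blast)
  thus ?thesis using mu_nonneg by auto
qed

definition FF :: "nat filter" where "FF = inf sequentially (principal {q. prime q})"

lemma FF_nonbot: "FF \<noteq> bot"
proof
  assume "FF = bot"
  hence "eventually (\<lambda>_. False) FF" by simp
  hence "eventually (\<lambda>q. \<not> prime q) sequentially"
    unfolding FF_def eventually_inf_principal by auto
  then obtain N where "\<forall>n::nat\<ge>N. \<not> prime n" unfolding eventually_sequentially by (rule exE)
  moreover obtain p where "prime p" "p > N" using bigger_prime by blast
  ultimately show False by auto
qed

lemma r_nonneg: assumes "\<rho> \<le> 1" shows "0 \<le> r \<rho>"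
proof -
  have "ereal 0 \<le> Liminf FF (\<lambda>q. ereal (rq q \<rho>))"
    by (rule Liminf_bounded) (use rq_nonneg[OF assms] in auto)
  thus ?thesis unfolding r_def FF_def[symmetric]
    by (cases "Liminf FF (\<lambda>q. ereal (rq q \<rho>))") auto
qed

lemma r_le:
  assumes "\<rho> \<le> 1" "\<forall>\<^sub>F q in sequentially. rq q \<rho> \<le> b"
  shows "r \<rho> \<le> b"
proof -
  have a: "ereal 0 \<le> Liminf FF (\<lambda>q. ereal (rq q \<rho>))"
    by (rule Liminf_bounded) (use rq_nonneg[OF assms(1)] in auto)
  have "\<forall>\<^sub>F q in FF. ereal (rq q \<rho>) \<le> ereal b"
    unfolding FF_def eventually_inf_principal using assms(2) by (auto elim: eventually_mono)
  hence b: "Liminf FF (\<lambda>q. ereal (rq q \<rho>)) \<le> ereal b"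
    by (rule Liminf_le[OF FF_nonbot])
  from a b show ?thesis unfolding r_def FF_def[symmetric]
    by (cases "Liminf FF (\<lambda>q. ereal (rq q \<rho>))") auto
qed
lemma block_eq:
  fixes B U sa sb sc ua ub uc :: nat
  assumes B: "B = 2 * U" and u: "ua < U" "ub < U" "uc < U"
    and e: "B * sa+ua + (B * sb+ub) = 2 * (B * sc+uc)"
  shows "sa + sb = 2 * sc"
proof (rule ccontr)
  assume ne: "sa + sb \<noteq> 2 * sc"
  have e': "B * sa + B * sb + ua + ub = 2 * (B * sc) + 2 * uc" using e by (simp add: distrib_left)
  show False
  proof (cases "sa + sb > 2 * sc")
    case True
    hence "B * (2 * sc+1) \<le> B * (sa+sb)" by (intro mult_le_mono2) simp
    hence "2 * (B * sc) + B \<le> B * sa + B * sb" by (simp add: distrib_left)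
    thus False using e' u B by linarith
  next
    case False
    hence "B * (sa+sb+1) \<le> B * (2 * sc)" using ne by (intro mult_le_mono2) simp
    hence "B * sa + B * sb + B \<le> 2 * (B * sc)" by (simp add: distrib_left)
    thus False using e' u B by linarith
  qed
qed

lemma construction:
  fixes S :: "nat set" and m p :: nat and \<rho> :: real
  assumes S: "S \<subseteq> {0..<m}"
    and free: "\<forall>a\<in>S. \<forall>b\<in>S. \<forall>c\<in>S. a \<noteq> b \<longrightarrow> (a+b) mod m \<noteq> (2 * c) mod m"
    and m: "m \<ge> 1" and p: "p \<ge> 8 * m" and dens: "8*\<rho>*real m \<le> real (card S)"
  shows "rq p \<rho> \<le> 1 / real m"
proof -
  define U where "U = p div (4 * m)"
  define B where "B = 2 * U"
  define f where "f = (\<lambda>(s,u). B * s+u)"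
  define T where "T = f ` (S \<times> {..<U})"
  have finS: "finite S" using S finite_subset by blast
  have U4: "4 * m*U \<le> p" unfolding U_def by (metis div_mult_self1_is_m mult.commute div_times_less_eq_dividend)
  have pm: "p = 4 * m*U + p mod (4 * m)" unfolding U_def by simp
  have "p mod (4 * m) < 4 * m" using m by simp
  hence U8: "p \<le> 8 * m*U" using pm p by linarith
  have Upos: "U \<ge> 1" using U8 m p by (cases U) auto
  have divB: "\<And>s u. u < U \<Longrightarrow> (B * s+u) div B = s \<and> (B * s+u) mod B = u"
    unfolding B_def by auto
  have inj: "inj_on f (S \<times> {..<U})"
  proof (rule inj_onI)
    fix x y assume xy: "x \<in> S \<times> {..<U}" "y \<in> S \<times> {..<U}" "f x = f y"
    obtain s u where x: "x = (s,u)" by (cases x)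
    obtain s' u' where y: "y = (s',u')" by (cases y)
    have "B * s + u = B * s' + u'" using xy(3) unfolding x y f_def by simp
    moreover have "u < U" "u' < U" using xy unfolding x y by auto
    ultimately have "s = s' \<and> u = u'" using divB[of u s] divB[of u' s'] by metis
    thus "x = y" using x y by simp
  qed
  have cardT: "card T = card S * U" unfolding T_def
    by (simp add: card_image[OF inj] card_cartesian_product)
  have small: "\<And>s u. s \<in> S \<Longrightarrow> u < U \<Longrightarrow> 2*(B * s+u) < p"
  proof -
    fix s u assume "s \<in> S" "u < U"
    hence "s + 1 \<le> m" using S by auto
    hence "B*(s+1) \<le> B * m" by (intro mult_le_mono2)
    hence "B * s+u < B * m" using \<open>u<U\<close> unfolding B_def by simp
    hence "2*(B * s+u) < 2 * (B * m)" by simp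
    moreover have "2 * (B * m) = 4 * m * U" unfolding B_def by simp
    ultimately show "2*(B * s+u) < p" using U4 by linarith
  qed
  have Tsub: "T \<subseteq> {0..<p}" unfolding T_def f_def using small by fastforce
  have Tdens: "real (card T) \<ge> \<rho> * real p"
  proof (cases "\<rho> \<le> 0")
    case True
    have "\<rho> * real p \<le> 0" using True by (simp add: mult_nonpos_nonneg)
    thus ?thesis by (meson of_nat_0_le_iff order_trans)
  next
    case False
    have "\<rho> * real p \<le> \<rho> * (8 * m*U)" using U8 False
      by (intro mult_left_mono) (simp_all, metis of_nat_le_iff of_nat_mult of_nat_numeral)
    also have "\<dots> = (8*\<rho>*m) * U" by simp
    also have "\<dots> \<le> real (card S) * U" using dens by (intro mult_right_mono) auto
    finally show ?thesis using cardT by simp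
  qed
  define g where "g = (\<lambda>(s,u,v). (B * s+u, B * s+v, B * s + (u+v) div 2))"
  have trip: "{(a, b, c). a \<in> T \<and> b \<in> T \<and> c \<in> T \<and> (a + b) mod p = (2 * c) mod p}
     \<subseteq> g ` (S \<times> {..<U} \<times> {..<U})"
  proof (clarify)
    fix a b c assume a: "a \<in> T" and b: "b \<in> T" and c: "c \<in> T" and md: "(a + b) mod p = (2 * c) mod p"
    obtain sa ua where A: "sa \<in> S" "ua < U" "a = B * sa+ua" using a unfolding T_def f_def by auto
    obtain sb ub where Bb: "sb \<in> S" "ub < U" "b = B * sb+ub" using b unfolding T_def f_def by auto
    obtain sc uc where Cc: "sc \<in> S" "uc < U" "c = B * sc+uc" using c unfolding T_def f_def by auto
    have "2 * a < p" using small[OF A(1,2)] A(3) by simp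
    moreover have "2 * b < p" using small[OF Bb(1,2)] Bb(3) by simp
    moreover have "2 * c < p" using small[OF Cc(1,2)] Cc(3) by simp
    ultimately have "a + b < p" "2 * c < p" by linarith+
    hence e: "a + b = 2 * c" using md by simp
    have e2: "B * sa + ua + (B * sb + ub) = 2 * (B * sc + uc)" using e unfolding A(3) Bb(3) Cc(3) .
    have s3: "sa + sb = 2 * sc" by (rule block_eq[OF B_def A(2) Bb(2) Cc(2) e2])
    have "sa \<noteq> sb \<longrightarrow> (sa + sb) mod m \<noteq> (2 * sc) mod m" using free A(1) Bb(1) Cc(1) by blast
    hence "sa = sb" using s3 by auto
    hence "sc = sa" using s3 by simp
    hence "ua + ub = 2 * uc" using e A Bb Cc \<open>sa = sb\<close> by simp
    hence "uc = (ua+ub) div 2" by simp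
    show "(a, b, c) \<in> g ` (S \<times> {..<U} \<times> {..<U})"
      unfolding g_def
      by (rule image_eqI[of _ _ "(sa,ua,ub)"]) (use A Bb Cc \<open>sa = sb\<close> \<open>sc = sa\<close> \<open>uc = (ua+ub) div 2\<close> in auto)
  qed
  have "card {(a, b, c). a \<in> T \<and> b \<in> T \<and> c \<in> T \<and> (a + b) mod p = (2 * c) mod p}
     \<le> card (g ` (S \<times> {..<U} \<times> {..<U}))"
    by (rule card_mono[OF _ trip]) (use finS in auto)
  also have "\<dots> \<le> card (S \<times> {..<U} \<times> {..<U})" by (rule card_image_le) (use finS in auto)
  also have "\<dots> = card S * U * U" by (simp add: card_cartesian_product)
  finally have ct: "card {(a, b, c). a \<in> T \<and> b \<in> T \<and> c \<in> T \<and> (a + b) mod p = (2 * c) mod p}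
     \<le> card S * U * U" .
  have cS: "card S \<le> m" using card_mono[OF _ S] by simp
  have ppos: "real p > 0" using p m by simp
  have "mu p T \<le> real (card S * U * U) / (real p)^2"
    unfolding mu_def by (rule divide_right_mono[OF of_nat_mono[OF ct]]) simp
  also have "\<dots> \<le> real (m * U * U) / (real p)^2"
    using cS by (intro divide_right_mono of_nat_mono mult_le_mono1) simp_all
  also have "\<dots> \<le> 1 / real m"
  proof -
    have "real (4 * m*U) \<le> real p" using U4 by linarith
    hence "real (4 * m*U) ^ 2 \<le> real p ^ 2" by (intro power_mono) auto
    hence "16 * (real m * (real m * U * U)) \<le> real p ^2" by (simp add: power2_eq_square algebra_simps)
    moreover have "0 \<le> real m * (real m * U * U)" by simp
    ultimately have "real m * (real m * U * U) \<le> real p ^2" by linarith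
    thus ?thesis using ppos m by (simp add: field_simps)
  qed
  finally have "mu p T \<le> 1 / real m" .
  moreover have "rq p \<rho> \<le> mu p T" by (rule rq_le_mu[OF Tsub Tdens])
  ultimately show ?thesis by linarith
qed
lemma decay:
  fixes C K :: real
  assumes Cpos: "C > 0" and Kpos: "K > 0"
    and M0: "\<forall>q\<ge>M0. \<exists>S. S \<subseteq> {0..<q} \<and>
               real (card S) > real q / exp (C * sqrt (ln (real q))) \<and>
               (\<forall>a\<in>S. \<forall>b\<in>S. \<forall>c\<in>S. a \<noteq> b \<longrightarrow> (a + b) mod q \<noteq> (2 * c) mod q)"
    and constr: "\<And>S m p \<rho>. S \<subseteq> {0..<m} \<Longrightarrow>
       \<forall>a\<in>S. \<forall>b\<in>S. \<forall>c\<in>S. a \<noteq> b \<longrightarrow> (a+b) mod m \<noteq> (2*c) mod m \<Longrightarrow>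
       m \<ge> 1 \<Longrightarrow> p \<ge> 8*m \<Longrightarrow> 8*\<rho>*real m \<le> real (card S) \<Longrightarrow> rq p \<rho> \<le> 1 / real m"
  shows "\<exists>\<epsilon>>0. \<forall>\<rho>. 0 < \<rho> \<and> \<rho> \<le> \<epsilon> \<longrightarrow> r \<rho> * exp ((ln \<rho>)^2 / (2 * C^2)) < K"
proof -
  define M' where "M' = max (real M0) 1"
  define Y where "Y = 4 * ln 8 + C^2 * M' + 16 * C^2 * \<bar>ln (2/K)\<bar> + 2"
  have C2: "C^2 > 0" using Cpos by simp
  have ln8: "ln (8::real) > 0" by simp
  have M'1: "M' \<ge> 1" "M' \<ge> real M0" unfolding M'_def by auto
  have Ypos: "Y > 0" unfolding Y_def using ln8 C2 M'1 by (simp add: add_pos_nonneg)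
  show ?thesis
  proof (intro exI[of _ "exp (- Y)"] conjI allI impI)
    show "exp (- Y) > 0" by simp
    fix \<rho> :: real assume \<rho>: "0 < \<rho> \<and> \<rho> \<le> exp (- Y)"
    define y where "y = - ln \<rho>"
    have "ln \<rho> \<le> - Y" using \<rho> by (metis ln_exp ln_le_cancel_iff exp_gt_zero)
    hence yY: "y \<ge> Y" unfolding y_def by simp
    have \<rho>y: "\<rho> = exp (- y)" unfolding y_def using \<rho> by simp
    have \<rho>1: "\<rho> \<le> 1" using \<rho> Ypos by (meson exp_le_one_iff neg_le_0_iff_le less_imp_le order_trans)
    define \<Lambda> where "\<Lambda> = y - ln 8"
    define z where "z = (\<Lambda> / C)^2"
    define m where "m = nat \<lfloor>exp z\<rfloor>"
    have y1: "y \<ge> 1" "y \<ge> 4 * ln 8" "y \<ge> 16 * C^2 * \<bar>ln (2/K)\<bar> + 1"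
    proof -
      have "0 \<le> C^2 * M'" "0 \<le> 16 * C^2 * \<bar>ln (2/K)\<bar>" using C2 M'1 by simp_all
      thus "y \<ge> 1" "y \<ge> 4 * ln 8" "y \<ge> 16 * C^2 * \<bar>ln (2/K)\<bar> + 1"
        using yY ln8 unfolding Y_def by linarith+
    qed
    have L1: "\<Lambda> \<ge> C^2 * M' + 1" using yY ln8 C2 M'1 unfolding Y_def \<Lambda>_def
      by (smt (verit) mult_nonneg_nonneg abs_ge_zero zero_le_power2)
    have L34: "\<Lambda> \<ge> 3 * y / 4" using y1 unfolding \<Lambda>_def by simp
    have Lpos: "\<Lambda> \<ge> 1" using L1 C2 M'1 by (smt (verit) mult_nonneg_nonneg)
    have z_eq: "z = \<Lambda>^2 / C^2" unfolding z_def by (simp add: power_divide)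
    have "\<Lambda>^2 \<ge> \<Lambda>" using Lpos by (simp add: power2_eq_square)
    hence "z \<ge> \<Lambda> / C^2" unfolding z_eq using C2 by (simp add: divide_right_mono)
    moreover have "\<Lambda> / C^2 \<ge> M'" using L1 C2 by (simp add: field_simps)
    ultimately have zM: "z \<ge> M'" by linarith
    have ez: "exp z \<ge> 1 + z" by (rule exp_ge_add_one_self)
    have fl: "real m \<le> exp z" "real m > exp z - 1"
      unfolding m_def using of_int_floor_le[of "exp z"] real_of_int_floor_gt_diff_one[of "exp z"]
      by (simp_all add: of_nat_nat)
    have mz: "real m > z" using fl ez by linarith
    hence mM0: "m \<ge> M0" using zM M'1 by linarith
    have m1: "m \<ge> 1" using mz zM M'1 by linarith
    obtain S where S: "S \<subseteq> {0..<m}" and cS: "real (card S) > real m / exp (C * sqrt (ln (real m)))"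
      and free: "\<forall>a\<in>S. \<forall>b\<in>S. \<forall>c\<in>S. a \<noteq> b \<longrightarrow> (a + b) mod m \<noteq> (2 * c) mod m"
      using M0 mM0 by blast
    have mpos: "real m > 0" using m1 by simp
    have "ln (real m) \<le> z" using fl(1) mpos by (metis ln_exp ln_le_cancel_iff exp_gt_zero)
    hence "sqrt (ln (real m)) \<le> sqrt z" by simp
    also have "sqrt z = \<Lambda> / C" unfolding z_def using Lpos Cpos by simp
    finally have "C * sqrt (ln (real m)) \<le> \<Lambda>" using Cpos by (simp add: field_simps)
    hence "exp (C * sqrt (ln (real m))) \<le> exp \<Lambda>" by simp
    also have "exp \<Lambda> = 1 / (8 * \<rho>)" unfolding \<Lambda>_def \<rho>y by (simp add: exp_diff exp_minus field_simps)
    finally have "real m / exp (C * sqrt (ln (real m))) \<ge> real m / (1 / (8 * \<rho>))"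
      using mpos by (intro divide_left_mono) (simp_all add: \<rho>)
    hence dens: "8 * \<rho> * real m \<le> real (card S)" using cS by (simp add: mult.commute)
    have "\<forall>\<^sub>F p in sequentially. rq p \<rho> \<le> 1 / real m"
      unfolding eventually_sequentially
      by (rule exI[of _ "8*m"]) (use constr[OF S free m1 _ dens] in auto)
    hence rle: "r \<rho> \<le> 1 / real m" by (rule r_le[OF \<rho>1])
    have "exp z \<ge> 2" using ez zM M'1 by linarith
    hence "real m \<ge> exp z / 2" using fl by linarith
    hence "1 / real m \<le> 2 * exp (- z)" using mpos
      by (simp add: exp_minus field_simps)
    hence r2: "r \<rho> \<le> 2 * exp (- z)" using rle by linarith
    have lnr: "(ln \<rho>)^2 = y^2" unfolding y_def by simp
    have "r \<rho> * exp ((ln \<rho>)^2 / (2 * C^2)) \<le> 2 * exp (- z) * exp (y^2 / (2 * C^2))"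
      unfolding lnr by (intro mult_right_mono r2) simp
    also have "\<dots> = 2 * exp (y^2 / (2 * C^2) - \<Lambda>^2 / C^2)"
      unfolding z_eq by (simp add: exp_diff exp_minus field_simps)
    also have "\<dots> \<le> 2 * exp (- (y^2 / (16 * C^2)))"
    proof -
      have "\<Lambda>^2 \<ge> (3 * y / 4)^2" using L34 y1 by (intro power_mono) auto
      hence "\<Lambda>^2 \<ge> 9 * y^2 / 16" by (simp add: power2_eq_square)
      hence "y^2 / (2 * C^2) - \<Lambda>^2 / C^2 \<le> - (y^2 / (16 * C^2))"
        using C2 by (simp add: field_simps)
      thus ?thesis by simp
    qed
    also have "\<dots> < 2 * exp (- ln (2 / K))"
    proof -
      have "y^2 \<ge> y" using y1 by (simp add: power2_eq_square)
      hence "y^2 > 16 * C^2 * \<bar>ln (2/K)\<bar>" using y1 by linarith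
      hence "y^2 / (16 * C^2) > \<bar>ln (2/K)\<bar>" using C2 by (simp add: field_simps)
      hence "- (y^2 / (16 * C^2)) < - ln (2 / K)" by linarith
      thus ?thesis by simp
    qed
    also have "\<dots> = K" using Kpos by (simp add: exp_minus)
    finally show "r \<rho> * exp ((ln \<rho>)^2 / (2 * C^2)) < K" .
  qed
qed
theorem lemma3:
  fixes C :: real
  assumes Cpos: "C > 0"
    and hyp: "\<forall>\<^sub>F q in sequentially. \<exists>S. S \<subseteq> {0..<q} \<and>
               real (card S) > real q / exp (C * sqrt (ln (real q))) \<and>
               (\<forall>a\<in>S. \<forall>b\<in>S. \<forall>c\<in>S. a \<noteq> b \<longrightarrow> (a + b) mod q \<noteq> (2 * c) mod q)"
  shows "\<forall>x :: nat \<Rightarrow> real.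
           (\<forall>n\<ge>1. 0 < x n \<and> x n \<le> 1) \<and> x \<longlonglongrightarrow> 0 \<longrightarrow>
           infinite {n. n \<ge> 1 \<and>
              r (x (n + 1)) / r (x n)
                < exp (- (1 / (2 * C^2)) * ((ln (x (n + 1)))^2 - (ln (x n))^2))}"
proof (intro allI impI)
  fix x :: "nat \<Rightarrow> real"
  assume hx: "(\<forall>n\<ge>1. 0 < x n \<and> x n \<le> 1) \<and> x \<longlonglongrightarrow> 0"
  obtain M0 where M0: "\<forall>q\<ge>M0. \<exists>S. S \<subseteq> {0..<q} \<and>
               real (card S) > real q / exp (C * sqrt (ln (real q))) \<and>
               (\<forall>a\<in>S. \<forall>b\<in>S. \<forall>c\<in>S. a \<noteq> b \<longrightarrow> (a + b) mod q \<noteq> (2 * c) mod q)"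
    using hyp unfolding eventually_sequentially by (rule exE)
  define E where "E n = exp (- (1 / (2 * C^2)) * ((ln (x (n + 1)))^2 - (ln (x n))^2))" for n
  define f where "f n = r (x n) * exp ((ln (x n))^2 / (2*C^2))" for n
  define A where "A = {n. n \<ge> 1 \<and> r (x (n + 1)) / r (x n) < E n}"
  show "infinite {n. n \<ge> 1 \<and>
              r (x (n + 1)) / r (x n)
                < exp (- (1 / (2 * C^2)) * ((ln (x (n + 1)))^2 - (ln (x n))^2))}"
  proof
    assume "finite {n. n \<ge> 1 \<and>
              r (x (n + 1)) / r (x n)
                < exp (- (1 / (2 * C^2)) * ((ln (x (n + 1)))^2 - (ln (x n))^2))}"
    hence "finite A" unfolding A_def E_def .
    then obtain N0 where N0: "\<forall>n\<in>A. n \<le> N0" using finite_nat_set_iff_bounded_le by blast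
    define N where "N = N0 + 1"
    have N1: "N \<ge> 1" unfolding N_def by simp
    have geq: "r (x (n+1)) / r (x n) \<ge> E n" if "n \<ge> N" for n
    proof -
      have "n \<notin> A" using N0 that unfolding N_def by fastforce
      thus ?thesis using that N1 unfolding A_def by auto
    qed
    have Epos: "E n > 0" for n unfolding E_def by simp
    have rnn: "r (x n) \<ge> 0" if "n \<ge> 1" for n using hx that r_nonneg by auto
    have rpos: "r (x n) > 0" if "n \<ge> N" for n
    proof -
      have "r (x (n+1)) / r (x n) > 0" using geq[OF that] Epos[of n] by linarith
      hence "r (x n) \<noteq> 0" by auto
      thus ?thesis using rnn[of n] that N1 by linarith
    qed
    have fstep: "f n \<le> f (Suc n)" if "n \<ge> N" for n
    proof -
      have le1: "E n * r (x n) \<le> r (x (n+1))" using geq[OF that] rpos[OF that]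
        by (simp add: pos_le_divide_eq)
      have eq: "E n * exp ((ln (x (n+1)))^2 / (2*C^2)) = exp ((ln (x n))^2 / (2*C^2))"
        unfolding E_def exp_add[symmetric] by (rule arg_cong[where f=exp]) (simp add: diff_divide_distrib)
      have "f n = (E n * r (x n)) * exp ((ln (x (n+1)))^2 / (2*C^2))"
        unfolding f_def eq[symmetric] by (simp add: algebra_simps)
      also have "\<dots> \<le> r (x (n+1)) * exp ((ln (x (n+1)))^2 / (2*C^2))"
        by (intro mult_right_mono le1) simp
      finally show ?thesis unfolding f_def by simp
    qed
    have mono: "f N \<le> f n" if "n \<ge> N" for n
      using that
    proof (induction n rule: dec_induct)
      case base thus ?case by simp
    next
      case (step n) thus ?case using fstep[of n] by linarith
    qed
    have fN: "f N > 0" unfolding f_def using rpos[of N] by simp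
    have ex: "\<exists>\<epsilon>>0. \<forall>\<rho>. 0 < \<rho> \<and> \<rho> \<le> \<epsilon> \<longrightarrow> r \<rho> * exp ((ln \<rho>)^2 / (2 * C^2)) < f N"
      by (rule decay[OF Cpos fN M0 construction])
    obtain \<epsilon> where \<epsilon>d: "\<epsilon> > 0 \<and> (\<forall>\<rho>. 0 < \<rho> \<and> \<rho> \<le> \<epsilon> \<longrightarrow> r \<rho> * exp ((ln \<rho>)^2 / (2 * C^2)) < f N)"
      using ex by (rule exE)
    have \<epsilon>: "\<epsilon> > 0" using \<epsilon>d by (rule conjunct1)
    have d: "\<forall>\<rho>. 0 < \<rho> \<and> \<rho> \<le> \<epsilon> \<longrightarrow> r \<rho> * exp ((ln \<rho>)^2 / (2 * C^2)) < f N" using \<epsilon>d by (rule conjunct2)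
    have "\<forall>\<^sub>F n in sequentially. dist (x n) 0 < \<epsilon>" using tendstoD[OF conjunct2[OF hx] \<epsilon>] .
    then obtain N2 where N2: "\<forall>n\<ge>N2. dist (x n) 0 < \<epsilon>" unfolding eventually_sequentially by (rule exE)
    define n where "n = max N N2"
    have "n \<ge> N" "n \<ge> N2" unfolding n_def by auto
    hence "x n > 0" "x n \<le> \<epsilon>" using hx N1 N2 by (auto simp: dist_real_def)
    hence "f n < f N" using d unfolding f_def by auto
    thus False using mono[OF \<open>n \<ge> N\<close>] by linarith
  qed
qed

end
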